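(* Let $n\ge2$, let $L_1,\dots,L_n$ be finite lists of reals, each sorted in nondecreasing order, and fix $0\le\tau_{min}\le\tau_{max}$ and $\delta\ge0$. If at least one valid tuple exists, then Algorithm-Chain (for the chain or ordered-sibling constraints) and Algorithm-Sibling (for the unordered-sibling constraints) find a valid tuple.
   Context: A tuple is a choice of indices $(p_1,\dots,p_n)$, with $p_i$ an index into $L_i$; its values are $x_i=L_i[p_i]$. The three constraint types are: - Chain: $x_{i+1}-x_i\in[\tau_{min},\tau_{max}]$ for $i=1,\dots,n-1$. - Ordered sibling: $x_{i+1}-x_i\in[-\delta,\delta]$ for $i=1,\dots,n-1$. - Unordered sibling: $|x_i-x_j|\le(n-1)\delta$ for all $i\ne j$. A tuple satisfying the constraints in force is called valid. Both algorithms keep a pointer into each list, initially at the first entry, and search for a valid tuple among the entries at or after the pointers. Algorithm-Chain searches as follows. While the current entries are not valid, take the smallest $i$ such that $(x_i,x_{i+1})$ violates $x_{i+1}-x_i\in[a,b]$, where $[a,b]=[\tau_{min},\tau_{max}]$ for chains and $[a,b]=[-\delta,\delta]$ for ordered siblings. If $x_{i+1}-x_i>b$, advance the pointer of $L_i$; if $x_{i+1}-x_i<a$, advance the pointer of $L_{i+1}$. The search stops when the current entries are valid or a pointer runs past the end of its list. Algorithm-Sibling searches under the unordered-sibling constraints. It repeatedly advances the pointer of a list whose current entry is too small to belong to any valid tuple whose other entries lie at or after the current pointers, and stops at a valid tuple or when a list is exhausted. *)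

theory Defs
  imports Main "HOL.Real"
begin

text \<open>Lists are indexed 0..n-1 (the paper uses 1..n). A tuple is a pointer
function p, p i being the index into list L i; its values are x i = L i ! p i.\<close>

definition in_range :: "nat \<Rightarrow> (nat \<Rightarrow> real list) \<Rightarrow> (nat \<Rightarrow> nat) \<Rightarrow> bool" where
  "in_range n L p \<longleftrightarrow> (\<forall>i<n. p i < length (L i))"

definition tval :: "(nat \<Rightarrow> real list) \<Rightarrow> (nat \<Rightarrow> nat) \<Rightarrow> nat \<Rightarrow> real" where
  "tval L p i = L i ! p i"

text \<open>Consecutive differences in [a,b]: chain constraint with [a,b] = [tau_min,tau_max],
ordered-sibling constraint with [a,b] = [-delta,delta].\<close>
definition consec_ok :: "real \<Rightarrow> real \<Rightarrow> nat \<Rightarrow> (nat \<Rightarrow> real list) \<Rightarrow> (nat \<Rightarrow> nat) \<Rightarrow> bool" where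
  "consec_ok a b n L p \<longleftrightarrow>
     (\<forall>i. Suc i < n \<longrightarrow> a \<le> tval L p (Suc i) - tval L p i \<and> tval L p (Suc i) - tval L p i \<le> b)"

definition valid_consec :: "real \<Rightarrow> real \<Rightarrow> nat \<Rightarrow> (nat \<Rightarrow> real list) \<Rightarrow> (nat \<Rightarrow> nat) \<Rightarrow> bool" where
  "valid_consec a b n L p \<longleftrightarrow> in_range n L p \<and> consec_ok a b n L p"

definition valid_sib :: "real \<Rightarrow> nat \<Rightarrow> (nat \<Rightarrow> real list) \<Rightarrow> (nat \<Rightarrow> nat) \<Rightarrow> bool" where
  "valid_sib \<delta> n L p \<longleftrightarrow> in_range n L p \<and>
     (\<forall>i<n. \<forall>j<n. i \<noteq> j \<longrightarrow> \<bar>tval L p i - tval L p j\<bar> \<le> (real n - 1) * \<delta>)"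

definition chain_step :: "real \<Rightarrow> real \<Rightarrow> nat \<Rightarrow> (nat \<Rightarrow> real list) \<Rightarrow> (nat \<Rightarrow> nat) \<Rightarrow> (nat \<Rightarrow> nat) \<Rightarrow> bool" where
  "chain_step a b n L p q \<longleftrightarrow> in_range n L p \<and> \<not> consec_ok a b n L p \<and>
     (let d = (\<lambda>i. tval L p (Suc i) - tval L p i);
          i = (LEAST i. Suc i < n \<and> \<not> (a \<le> d i \<and> d i \<le> b))
      in q = (if d i > b then p(i := Suc (p i)) else p(Suc i := Suc (p (Suc i)))))"

definition sib_step :: "real \<Rightarrow> nat \<Rightarrow> (nat \<Rightarrow> real list) \<Rightarrow> (nat \<Rightarrow> nat) \<Rightarrow> (nat \<Rightarrow> nat) \<Rightarrow> bool" where
  "sib_step \<delta> n L p q \<longleftrightarrow> in_range n L p \<and> \<not> valid_sib \<delta> n L p \<and>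
     (\<exists>i<n. \<not> (\<exists>r. valid_sib \<delta> n L r \<and> r i = p i \<and> (\<forall>j<n. p j \<le> r j))
            \<and> q = p(i := Suc (p i)))"

definition finds_valid :: "((nat \<Rightarrow> nat) \<Rightarrow> (nat \<Rightarrow> nat) \<Rightarrow> bool) \<Rightarrow> ((nat \<Rightarrow> nat) \<Rightarrow> bool) \<Rightarrow> bool" where
  "finds_valid step valid \<longleftrightarrow>
     \<not> (\<exists>f. f 0 = (\<lambda>_. 0) \<and> (\<forall>k. step (f k) (f (Suc k)))) \<and>
     (\<forall>p. step\<^sup>*\<^sup>* (\<lambda>_. 0) p \<and> \<not> (\<exists>q. step p q) \<longrightarrow> valid p)"

end

theory Submission
  imports Defs
begin

lemma sum_upd_suc:
  fixes p :: "nat \<Rightarrow> nat"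
  assumes "i < n"
  shows "(\<Sum>j<n. (p(i := Suc (p i))) j) = (\<Sum>j<n. p j) + 1"
proof -
  have "(\<Sum>j<n. (p(i := Suc (p i))) j) = (\<Sum>j<n. p j + (if j = i then 1 else 0))"
    by (rule sum.cong) auto
  also have "\<dots> = (\<Sum>j<n. p j) + 1" using assms by (simp add: sum.distrib)
  finally show ?thesis .
qed

lemma generic:
  fixes step :: "(nat \<Rightarrow> nat) \<Rightarrow> (nat \<Rightarrow> nat) \<Rightarrow> bool" and valid
  assumes v0: "valid r0"
    and vr: "\<And>r. valid r \<Longrightarrow> in_range n L r"
    and pres: "\<And>p q r. step p q \<Longrightarrow> valid r \<Longrightarrow> (\<forall>i<n. p i \<le> r i) \<Longrightarrow>
                  \<exists>i<n. q = p(i := Suc (p i)) \<and> p i < r i"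
    and prog: "\<And>p r. valid r \<Longrightarrow> (\<forall>i<n. p i \<le> r i) \<Longrightarrow> \<not> valid p \<Longrightarrow> \<exists>q. step p q"
  shows "finds_valid step valid"
proof -
  define I where "I p \<longleftrightarrow> (\<exists>r. valid r \<and> (\<forall>i<n. p i \<le> r i))" for p
  have Istep: "I q" if "I p" "step p q" for p q
  proof -
    from that(1) obtain r where r: "valid r" "\<forall>i<n. p i \<le> r i" unfolding I_def by blast
    from pres[OF that(2) r] obtain i where "i < n" "q = p(i := Suc (p i))" "p i < r i" by blast
    with r show ?thesis unfolding I_def by (intro exI[of _ r]) auto
  qed
  have reach: "I p" if "step\<^sup>*\<^sup>* (\<lambda>_. 0) p" for p
    using that
  proof induction
    case base then show ?case using v0 unfolding I_def by auto
  next
    case (step y z) then show ?case using Istep by blast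
  qed
  define B where "B = (\<Sum>j<n. length (L j))"
  have bound: "(\<Sum>j<n. p j) \<le> B" if "I p" for p
  proof -
    from that obtain r where r: "valid r" "\<forall>i<n. p i \<le> r i" unfolding I_def by blast
    have "\<forall>i<n. r i < length (L i)" using vr[OF r(1)] unfolding in_range_def by blast
    then show ?thesis unfolding B_def using r(2)
      by (intro sum_mono) (meson lessThan_iff le_trans less_imp_le)
  qed
  have noinf: "\<not> (\<exists>f. f 0 = (\<lambda>_. 0) \<and> (\<forall>k. step (f k) (f (Suc k))))"
  proof
    assume "\<exists>f. f 0 = (\<lambda>_. 0) \<and> (\<forall>k. step (f k) (f (Suc k)))"
    then obtain f where f0: "f 0 = (\<lambda>_. 0)" and fs: "\<forall>k. step (f k) (f (Suc k))" by blast
    have "step\<^sup>*\<^sup>* (\<lambda>_. 0) (f k) \<and> (\<Sum>j<n. f k j) = k" for k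
    proof (induction k)
      case 0 then show ?case using f0 by simp
    next
      case (Suc k)
      have I: "I (f k)" using reach Suc by blast
      then obtain r where r: "valid r" "\<forall>i<n. f k i \<le> r i" unfolding I_def by blast
      from pres[OF fs[rule_format, of k] r] obtain i where
        "i < n" "f (Suc k) = (f k)(i := Suc (f k i))" by blast
      then have "(\<Sum>j<n. f (Suc k) j) = Suc k" using Suc sum_upd_suc by simp
      moreover have "step\<^sup>*\<^sup>* (\<lambda>_. 0) (f (Suc k))"
        using Suc fs by (meson rtranclp.rtrancl_into_rtrancl)
      ultimately show ?case by simp
    qed
    then have "Suc B \<le> B" using bound reach by metis
    then show False by simp
  qed
  have "valid p" if "step\<^sup>*\<^sup>* (\<lambda>_. 0) p" "\<not> (\<exists>q. step p q)" for p
    using reach[OF that(1)] prog that(2) unfolding I_def by blast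
  with noinf show ?thesis unfolding finds_valid_def by blast
qed

lemma chain_ok:
  assumes sorted: "\<forall>i<n. sorted (L i)" and ex: "\<exists>p. valid_consec a b n L p"
  shows "finds_valid (chain_step a b n L) (valid_consec a b n L)"
proof -
  from ex obtain r0 where r0: "valid_consec a b n L r0" by blast
  show ?thesis
  proof (rule generic[where n = n and L = L and valid = "valid_consec a b n L", OF r0])
    show "in_range n L r" if "valid_consec a b n L r" for r
      using that unfolding valid_consec_def by blast
  next
    fix p q r
    assume st: "chain_step a b n L p q" and vr: "valid_consec a b n L r"
      and le: "\<forall>i<n. p i \<le> r i"
    define d where "d = (\<lambda>i. tval L p (Suc i) - tval L p i)"
    define i where "i = (LEAST i. Suc i < n \<and> \<not> (a \<le> d i \<and> d i \<le> b))"
    from st have nok: "\<not> consec_ok a b n L p" and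
      q: "q = (if d i > b then p(i := Suc (p i)) else p(Suc i := Suc (p (Suc i))))"
      unfolding chain_step_def d_def i_def Let_def by auto
    from nok have "\<exists>i. Suc i < n \<and> \<not> (a \<le> d i \<and> d i \<le> b)"
      unfolding consec_ok_def d_def by blast
    then have iP: "Suc i < n \<and> \<not> (a \<le> d i \<and> d i \<le> b)"
      unfolding i_def by (rule LeastI_ex)
    have rr: "\<forall>k<n. r k < length (L k)" and rc: "consec_ok a b n L r"
      using vr unfolding valid_consec_def in_range_def by auto
    have mono: "L k ! p k \<le> L k ! r k" if "k < n" for k
      using sorted that rr le by (simp add: sorted_nth_mono)
    have rci: "a \<le> tval L r (Suc i) - tval L r i \<and> tval L r (Suc i) - tval L r i \<le> b"
      using rc iP unfolding consec_ok_def by blast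
    show "\<exists>i<n. q = p(i := Suc (p i)) \<and> p i < r i"
    proof (cases "d i > b")
      case True
      have "p i \<noteq> r i"
      proof
        assume eq: "p i = r i"
        have "L (Suc i) ! p (Suc i) \<le> L (Suc i) ! r (Suc i)" using mono iP by blast
        then show False using True rci eq unfolding d_def tval_def by auto
      qed
      moreover have "p i \<le> r i" using le iP by simp
      ultimately show ?thesis using True q iP by (intro exI[of _ i]) auto
    next
      case False
      have "p (Suc i) \<noteq> r (Suc i)"
      proof
        assume eq: "p (Suc i) = r (Suc i)"
        have "L i ! p i \<le> L i ! r i" using mono iP by simp
        then show False using False iP rci eq unfolding d_def tval_def by auto
      qed
      then show ?thesis using False q le iP by (intro exI[of _ "Suc i"]) auto
    qed
  next
    fix p r
    assume vr: "valid_consec a b n L r" and le: "\<forall>i<n. p i \<le> r i"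
      and nv: "\<not> valid_consec a b n L p"
    have ir: "in_range n L p" using vr le unfolding valid_consec_def in_range_def
      using le_less_trans by blast
    then have "\<not> consec_ok a b n L p" using nv unfolding valid_consec_def by blast
    then show "\<exists>q. chain_step a b n L p q" using ir
      unfolding chain_step_def Let_def by auto
  qed
qed

lemma sib_ok:
  assumes sorted: "\<forall>i<n. sorted (L i)" and ex: "\<exists>p. valid_sib \<delta> n L p"
  shows "finds_valid (sib_step \<delta> n L) (valid_sib \<delta> n L)"
proof -
  from ex obtain r0 where r0: "valid_sib \<delta> n L r0" by blast
  show ?thesis
  proof (rule generic[where n = n and L = L and valid = "valid_sib \<delta> n L", OF r0])
    show "in_range n L r" if "valid_sib \<delta> n L r" for r
      using that unfolding valid_sib_def by blast
  next
    fix p q r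
    assume st: "sib_step \<delta> n L p q" and vr: "valid_sib \<delta> n L r"
      and le: "\<forall>i<n. p i \<le> r i"
    from st obtain i where i: "i < n"
      "\<not> (\<exists>r. valid_sib \<delta> n L r \<and> r i = p i \<and> (\<forall>j<n. p j \<le> r j))"
      "q = p(i := Suc (p i))" unfolding sib_step_def by blast
    then have "r i \<noteq> p i" using vr le by blast
    then show "\<exists>i<n. q = p(i := Suc (p i)) \<and> p i < r i"
      using i le by (intro exI[of _ i]) auto
  next
    fix p r
    assume vr: "valid_sib \<delta> n L r" and le: "\<forall>i<n. p i \<le> r i"
      and nv: "\<not> valid_sib \<delta> n L p"
    have ir: "in_range n L p" using vr le unfolding valid_sib_def in_range_def
      using le_less_trans by blast
    show "\<exists>q. sib_step \<delta> n L p q"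
    proof (rule ccontr)
      assume nq: "\<not> (\<exists>q. sib_step \<delta> n L p q)"
      have all: "\<forall>i<n. \<exists>r. valid_sib \<delta> n L r \<and> r i = p i \<and> (\<forall>j<n. p j \<le> r j)"
        using nq ir nv unfolding sib_step_def by blast
      have one: "tval L p j - tval L p i \<le> (real n - 1) * \<delta>"
        if "i < n" "j < n" "i \<noteq> j" for i j
      proof -
        from all that(1) obtain s where s: "valid_sib \<delta> n L s" "s i = p i" "\<forall>j<n. p j \<le> s j"
          by blast
        have "\<forall>k<n. s k < length (L k)" using s(1) unfolding valid_sib_def in_range_def by blast
        then have "L j ! p j \<le> L j ! s j" using sorted s(3) that(2) by (simp add: sorted_nth_mono)
        moreover have "\<bar>tval L s j - tval L s i\<bar> \<le> (real n - 1) * \<delta>"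
          using s(1) that unfolding valid_sib_def by auto
        ultimately show ?thesis using s(2) unfolding tval_def by auto
      qed
      have "valid_sib \<delta> n L p"
        unfolding valid_sib_def using ir one
        by (auto simp: abs_le_iff)
      with nv show False by blast
    qed
  qed
qed

theorem mainTheorem2:
  fixes n :: nat and L :: "nat \<Rightarrow> real list" and \<tau>min \<tau>max \<delta> :: real
  assumes "n \<ge> 2"
    and "\<forall>i<n. sorted (L i)"
    and "0 \<le> \<tau>min" and "\<tau>min \<le> \<tau>max" and "0 \<le> \<delta>"
  shows "((\<exists>p. valid_consec \<tau>min \<tau>max n L p) \<longrightarrow>
            finds_valid (chain_step \<tau>min \<tau>max n L) (valid_consec \<tau>min \<tau>max n L))
       \<and> ((\<exists>p. valid_consec (-\<delta>) \<delta> n L p) \<longrightarrow>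
            finds_valid (chain_step (-\<delta>) \<delta> n L) (valid_consec (-\<delta>) \<delta> n L))
       \<and> ((\<exists>p. valid_sib \<delta> n L p) \<longrightarrow>
            finds_valid (sib_step \<delta> n L) (valid_sib \<delta> n L))"
  using chain_ok[OF assms(2)] sib_ok[OF assms(2)] by blast

end
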